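(* Let $\omega(s,t)$ be a non-negative bounded continuous function on $\{(s,t):0\le s\le t\}$ and let $N$ be a point process with last-arrival-time dependent intensity $\omega$ (as defined in the context). Then for every $k=1,2,\ldots$ and all $0\le s<t$, \[\frac{\partial}{\partial t}\,\mathbb{P}\bigl(N(t)=N(s)=k\bigr)=-\int_0^s\omega(u,t)\,\frac{\partial}{\partial u}\mathbb{P}\bigl(N(t)=N(u)=k\bigr)\,du.\]
   Context: A point process with last-arrival-time dependent intensity $\omega$ is a non-decreasing, right-continuous, non-negative integer valued stochastic process $N(t)$, $t\ge0$, with $N(0)=0$, such that, writing $\tau_0=0$, $\tau_k=\inf\{t\ge0:N(t)\ge k\}$ ($k\ge1$) for the arrival times and $\mathcal{F}_t=\sigma[N(s),s\le t]$, for every $k\ge1$ one has $\mathbb{P}(t<\tau_k\mid\mathcal{F}_{\tau_{k-1}})=\exp\bigl(-\int_{\tau_{k-1}}^t\omega(\tau_{k-1},u)\,du\bigr)$ on $\{t\ge\tau_{k-1}\}$. *)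

theory Defs
  imports "HOL-Probability.Probability"
begin

definition nat_filtration :: "'a measure \<Rightarrow> (real \<Rightarrow> 'a \<Rightarrow> nat) \<Rightarrow> real \<Rightarrow> 'a measure" where
  "nat_filtration M N t =
     sigma (space M) {N s -` A \<inter> space M | s A. 0 \<le> s \<and> s \<le> t}"

definition nat_filtration_inf :: "'a measure \<Rightarrow> (real \<Rightarrow> 'a \<Rightarrow> nat) \<Rightarrow> 'a measure" where
  "nat_filtration_inf M N = sigma (space M) {N s -` A \<inter> space M | s A. 0 \<le> s}"

definition stopped_sigma :: "'a measure \<Rightarrow> (real \<Rightarrow> 'a \<Rightarrow> nat) \<Rightarrow> ('a \<Rightarrow> ereal) \<Rightarrow> 'a measure" where
  "stopped_sigma M N T =
     sigma (space M) {A. A \<in> sets (nat_filtration_inf M N) \<and>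
        (\<forall>t\<ge>0. {x \<in> A. T x \<le> ereal t} \<in> sets (nat_filtration M N t))}"

definition arrival_time :: "(real \<Rightarrow> 'a \<Rightarrow> nat) \<Rightarrow> nat \<Rightarrow> 'a \<Rightarrow> ereal" where
  "arrival_time N k x = Inf {ereal t | t. 0 \<le> t \<and> k \<le> N t x}"

definition last_arrival_intensity_process ::
    "'a measure \<Rightarrow> (real \<Rightarrow> real \<Rightarrow> real) \<Rightarrow> (real \<Rightarrow> 'a \<Rightarrow> nat) \<Rightarrow> bool" where
  "last_arrival_intensity_process M \<omega> N \<longleftrightarrow>
     (\<forall>t. N t \<in> measurable M (count_space UNIV)) \<and>
     (\<forall>x\<in>space M. N 0 x = 0 \<and> mono_on {0..} (\<lambda>t. N t x) \<and>
        (\<forall>t\<ge>0. continuous (at_right t) (\<lambda>s. N s x))) \<and>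
     (\<forall>k\<ge>1. \<forall>t\<ge>0. AE x in M. arrival_time N (k - 1) x \<le> ereal t \<longrightarrow>
        real_cond_exp M (stopped_sigma M N (arrival_time N (k - 1)))
          (indicator {y. ereal t < arrival_time N k y}) x
        = exp (- integral {real_of_ereal (arrival_time N (k - 1) x)..t}
                 (\<lambda>u. \<omega> (real_of_ereal (arrival_time N (k - 1) x)) u)))"

end

theory Submission
  imports Defs
begin


definition wt :: "(real \<Rightarrow> real \<Rightarrow> real) \<Rightarrow> real \<Rightarrow> real \<Rightarrow> real" where
  "wt \<omega> a r = \<omega> (max 0 a) (max (max 0 a) r)"

definition Phi :: "(real \<Rightarrow> real \<Rightarrow> real) \<Rightarrow> real \<Rightarrow> real \<Rightarrow> real" where
  "Phi \<omega> a u = (u - a) * integral {0..1} (\<lambda>\<theta>. wt \<omega> a (a + \<theta> * (u - a)))"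

definition Gf :: "(real \<Rightarrow> real \<Rightarrow> real) \<Rightarrow> real \<Rightarrow> real \<Rightarrow> real" where
  "Gf \<omega> a u = exp (- Phi \<omega> a u)"

lemma wt_cont:
  assumes "continuous_on {p. 0 \<le> fst p \<and> fst p \<le> snd p} (\<lambda>p. \<omega> (fst p) (snd p))"
  shows "continuous_on UNIV (\<lambda>p. wt \<omega> (fst p) (snd p))"
proof -
  have c: "continuous_on UNIV (\<lambda>p::real\<times>real. (max 0 (fst p), max (max 0 (fst p)) (snd p)))"
    by (intro continuous_intros)
  have i: "(\<lambda>p::real\<times>real. (max 0 (fst p), max (max 0 (fst p)) (snd p))) ` UNIV \<subseteq> {p. 0 \<le> fst p \<and> fst p \<le> snd p}"
    by auto
  show ?thesis using continuous_on_compose2[OF assms c i] by (simp add: wt_def)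
qed

lemma wt_eq: "0 \<le> a \<Longrightarrow> a \<le> r \<Longrightarrow> wt \<omega> a r = \<omega> a r"
  by (simp add: wt_def)

lemma wt_nonneg: "(\<And>s t. 0 \<le> s \<Longrightarrow> s \<le> t \<Longrightarrow> 0 \<le> \<omega> s t) \<Longrightarrow> 0 \<le> wt \<omega> a r"
  by (simp add: wt_def)

lemma wt_le: "(\<And>s t. 0 \<le> s \<Longrightarrow> s \<le> t \<Longrightarrow> \<omega> s t \<le> B) \<Longrightarrow> wt \<omega> a r \<le> B"
  by (simp add: wt_def)

lemma Phi_cont:
  assumes "continuous_on {p. 0 \<le> fst p \<and> fst p \<le> snd p} (\<lambda>p. \<omega> (fst p) (snd p))"
  shows "continuous_on UNIV (\<lambda>p. Phi \<omega> (fst p) (snd p))"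
proof -
  note wc = continuous_on_compose2[OF wt_cont[OF assms], of _ "\<lambda>x. (f x, g x)" for f g, simplified]
  have "continuous_on (UNIV \<times> cbox 0 1) (\<lambda>(p::real\<times>real, \<theta>::real). wt \<omega> (fst p) (fst p + \<theta> * (snd p - fst p)))"
    by (auto simp: split_beta intro!: continuous_intros wc)
  from integral_continuous_on_param[OF this]
  have "continuous_on UNIV (\<lambda>p. integral (cbox 0 1) (\<lambda>\<theta>. wt \<omega> (fst p) (fst p + \<theta> * (snd p - fst p))))" .
  then show ?thesis unfolding Phi_def
    by (auto intro!: continuous_intros simp: cbox_interval)
qed

lemma Gf_cont:
  assumes "continuous_on {p. 0 \<le> fst p \<and> fst p \<le> snd p} (\<lambda>p. \<omega> (fst p) (snd p))"
  shows "continuous_on UNIV (\<lambda>p. Gf \<omega> (fst p) (snd p))"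
  unfolding Gf_def by (intro continuous_intros Phi_cont assms)

lemma Phi_eq_integral:
  assumes "continuous_on {p. 0 \<le> fst p \<and> fst p \<le> snd p} (\<lambda>p. \<omega> (fst p) (snd p))"
    and "a \<le> u"
  shows "Phi \<omega> a u = integral {a..u} (wt \<omega> a)"
proof (cases "a = u")
  case True then show ?thesis by (simp add: Phi_def)
next
  case False
  with assms have au: "0 < u - a" by simp
  have cw: "continuous_on UNIV (wt \<omega> a)"
  proof -
    have "continuous_on UNIV (\<lambda>r::real. (a, r))" by (intro continuous_intros)
    from continuous_on_compose2[OF wt_cont[OF assms(1)] this] show ?thesis by simp
  qed
  have "(wt \<omega> a has_integral integral {a..u} (wt \<omega> a)) (cbox a u)"
    using integrable_continuous_interval[OF continuous_on_subset[OF cw]] 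
    by (simp add: cbox_interval integrable_integral)
  from has_integral_affinity'[OF this au, of a]
  have "((\<lambda>x. wt \<omega> a ((u - a) * x + a)) has_integral integral {a..u} (wt \<omega> a) / (u - a)) {0..1}"
    using au by (simp add: cbox_interval divide_inverse mult.commute)
  then have "integral {0..1} (\<lambda>\<theta>. wt \<omega> a (a + \<theta> * (u - a))) = integral {a..u} (wt \<omega> a) / (u - a)"
    by (simp add: has_integral_iff algebra_simps)
  then show ?thesis using au by (simp add: Phi_def)
qed

lemma wt_cont1:
  assumes "continuous_on {p. 0 \<le> fst p \<and> fst p \<le> snd p} (\<lambda>p. \<omega> (fst p) (snd p))"
  shows "continuous_on S (wt \<omega> a)"
proof -
  have "continuous_on UNIV (\<lambda>r::real. (a, r))" by (intro continuous_intros)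
  from continuous_on_compose2[OF wt_cont[OF assms] this] show ?thesis
    by (auto intro: continuous_on_subset)
qed

lemma Gf_deriv_within:
  assumes "continuous_on {p. 0 \<le> fst p \<and> fst p \<le> snd p} (\<lambda>p. \<omega> (fst p) (snd p))"
    and "a \<le> r" "r \<le> b"
  shows "((\<lambda>u. Gf \<omega> a u) has_real_derivative -(wt \<omega> a r * Gf \<omega> a r)) (at r within {a..b})"
proof -
  have d: "((\<lambda>u. integral {a..u} (wt \<omega> a)) has_real_derivative wt \<omega> a r) (at r within {a..b})"
    by (rule integral_has_real_derivative[OF wt_cont1[OF assms(1)]]) (use assms in auto)
  have d2: "((\<lambda>u. exp (- integral {a..u} (wt \<omega> a))) has_real_derivative
      exp (- integral {a..r} (wt \<omega> a)) * (- wt \<omega> a r)) (at r within {a..b})"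
    by (rule derivative_eq_intros d refl | simp)+
    have e: "exp (- integral {a..r} (wt \<omega> a)) * (- wt \<omega> a r) = -(wt \<omega> a r * Gf \<omega> a r)"
      using assms by (simp add: Gf_def Phi_eq_integral[OF assms(1)])
    show ?thesis
    apply (rule has_field_derivative_transform_within[OF d2[unfolded e], of 1])
    using assms by (auto simp: Gf_def Phi_eq_integral[OF assms(1)] mult.commute)
qed

lemma Gf_deriv_at:
  assumes "continuous_on {p. 0 \<le> fst p \<and> fst p \<le> snd p} (\<lambda>p. \<omega> (fst p) (snd p))"
    and "a < r"
  shows "((\<lambda>u. Gf \<omega> a u) has_real_derivative -(wt \<omega> a r * Gf \<omega> a r)) (at r)"
  using Gf_deriv_within[OF assms(1), of a r "r+1"] assms(2) at_within_Icc_at[of a r "r+1"] by auto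

lemma Gf_ftc:
  assumes "continuous_on {p. 0 \<le> fst p \<and> fst p \<le> snd p} (\<lambda>p. \<omega> (fst p) (snd p))"
    and "a \<le> x"
  shows "((\<lambda>r. wt \<omega> a r * Gf \<omega> a r) has_integral (1 - Gf \<omega> a x)) {a..x}"
proof -
  have "((\<lambda>r. -(wt \<omega> a r * Gf \<omega> a r)) has_integral (Gf \<omega> a x - Gf \<omega> a a)) {a..x}"
    by (rule fundamental_theorem_of_calculus[OF assms(2)])
      (auto simp: has_real_derivative_iff_has_vector_derivative[symmetric] intro!: Gf_deriv_within[OF assms(1)])
  from has_integral_neg[OF this] show ?thesis by (simp add: Gf_def Phi_def)
qed

lemma Phi_nonneg:
  assumes "continuous_on {p. 0 \<le> fst p \<and> fst p \<le> snd p} (\<lambda>p. \<omega> (fst p) (snd p))"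
    and "\<And>s t. 0 \<le> s \<Longrightarrow> s \<le> t \<Longrightarrow> 0 \<le> \<omega> s t" and "a \<le> u"
  shows "0 \<le> Phi \<omega> a u"
  unfolding Phi_eq_integral[OF assms(1,3)]
  by (rule integral_nonneg[OF integrable_continuous_interval[OF wt_cont1[OF assms(1)]]])
     (simp add: wt_nonneg assms(2))

lemma Gf_le1:
  assumes "continuous_on {p. 0 \<le> fst p \<and> fst p \<le> snd p} (\<lambda>p. \<omega> (fst p) (snd p))"
    and "\<And>s t. 0 \<le> s \<Longrightarrow> s \<le> t \<Longrightarrow> 0 \<le> \<omega> s t" and "a \<le> u"
  shows "Gf \<omega> a u \<le> 1" "0 < Gf \<omega> a u"
  using Phi_nonneg[OF assms] by (auto simp: Gf_def)




locale lp = prob_space M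
  for M :: "'a measure" +
  fixes \<omega> :: "real \<Rightarrow> real \<Rightarrow> real" and N :: "real \<Rightarrow> 'a \<Rightarrow> nat" and B :: real
  assumes nn: "\<And>s t. 0 \<le> s \<Longrightarrow> s \<le> t \<Longrightarrow> 0 \<le> \<omega> s t"
    and bd: "\<And>s t. 0 \<le> s \<Longrightarrow> s \<le> t \<Longrightarrow> \<omega> s t \<le> B"
    and cont: "continuous_on {p. 0 \<le> fst p \<and> fst p \<le> snd p} (\<lambda>p. \<omega> (fst p) (snd p))"
    and proc: "last_arrival_intensity_process M \<omega> N"
begin

abbreviation "\<tau> \<equiv> arrival_time N"

lemma N_meas[measurable]: "N t \<in> measurable M (count_space UNIV)"
  using proc unfolding last_arrival_intensity_process_def by auto

lemma N_props: assumes "x \<in> space M"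
  shows "N 0 x = 0" "mono_on {0..} (\<lambda>t. N t x)" "\<And>t. t \<ge> 0 \<Longrightarrow> continuous (at_right t) (\<lambda>s. N s x)"
  using proc assms unfolding last_arrival_intensity_process_def by auto

lemma N_mono: assumes "x \<in> space M" "0 \<le> a" "a \<le> b" shows "N a x \<le> N b x"
  using N_props(2)[OF assms(1)] assms(2,3) by (auto simp: mono_on_def)

lemma B_nonneg: "0 \<le> B"
  using nn[of 0 0] bd[of 0 0] by simp

lemma tau_nonneg: "0 \<le> \<tau> k x"
  unfolding arrival_time_def by (rule Inf_greatest) auto

lemma tau_0: "\<tau> 0 x = 0"
  unfolding arrival_time_def
  by (rule antisym[OF Inf_lower]) (force, rule Inf_greatest, auto)

lemma tau_mono: "\<tau> k x \<le> \<tau> (Suc k) x"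
  unfolding arrival_time_def by (rule Inf_superset_mono) auto

lemma tau_le_iff:
  assumes x: "x \<in> space M" and u: "0 \<le> u"
  shows "\<tau> k x \<le> ereal u \<longleftrightarrow> k \<le> N u x"
proof
  assume "k \<le> N u x"
  then show "\<tau> k x \<le> ereal u" unfolding arrival_time_def
    using u by (intro Inf_lower) auto
next
  assume le: "\<tau> k x \<le> ereal u"
  have "((\<lambda>s. N s x) \<longlongrightarrow> N u x) (at_right u)"
    using N_props(3)[OF x u] by (simp add: continuous_within)
  then have "eventually (\<lambda>s. N s x \<in> {N u x}) (at_right u)"
    by (rule topological_tendstoD) (auto intro: discrete_topology_class.open_discrete)
  then obtain b where b: "b > u" "\<And>y. u < y \<Longrightarrow> y < b \<Longrightarrow> N y x = N u x"
    by (auto simp: eventually_at_right_field)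
  have "Inf {ereal t | t. 0 \<le> t \<and> k \<le> N t x} < ereal b"
  proof -
    have "ereal u < ereal b" using b(1) by simp
    with le show ?thesis unfolding arrival_time_def by (rule le_less_trans)
  qed
  then obtain t where t: "0 \<le> t" "k \<le> N t x" "t < b"
    by (auto simp: Inf_less_iff)
  show "k \<le> N u x"
  proof (cases "t \<le> u")
    case True then show ?thesis using N_mono[OF x t(1) True] t by simp
  next
    case False then show ?thesis using b(2)[of t] t by simp
  qed
qed

lemma sets_N_ge[measurable]: "{x \<in> space M. k \<le> N u x} \<in> sets M"
  by measurable

lemma tau_meas[measurable]: "\<tau> k \<in> borel_measurable M"
proof (rule borel_measurableI_le)
  fix y :: ereal
  show "{x \<in> space M. \<tau> k x \<le> y} \<in> sets M"
  proof (cases y)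
    case (real u)
    show ?thesis
    proof (cases "0 \<le> u")
      case True
      then have "{x \<in> space M. \<tau> k x \<le> y} = {x \<in> space M. k \<le> N u x}"
        using tau_le_iff real by auto
      then show ?thesis by simp
    next
      case False
      then have "{x \<in> space M. \<tau> k x \<le> y} = {}"
      proof -
        have "\<not> \<tau> k x \<le> ereal u" for x
        proof
          assume "\<tau> k x \<le> ereal u"
          with tau_nonneg[of k x] have "ereal 0 \<le> ereal u" by (metis order_trans zero_ereal_def)
          with False show False by simp
        qed
        then show ?thesis using real by auto
      qed
      then show ?thesis by (metis sets.empty_sets)
    qed
  next
    case PInf then show ?thesis by simp
  next
    case MInf then have "{x \<in> space M. \<tau> k x \<le> y} = {}"
      using tau_nonneg[of k] by auto
    then show ?thesis by (metis sets.empty_sets)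
  qed
qed

lemma event_eq:
  assumes x: "x \<in> space M" and "0 \<le> s" "s \<le> r"
  shows "(N r x = k \<and> N s x = k) \<longleftrightarrow> (\<tau> k x \<le> ereal s \<and> ereal r < \<tau> (Suc k) x)"
  using N_mono[OF x assms(2,3)] tau_le_iff[OF x assms(2), of k] tau_le_iff[OF x, of r "Suc k"] assms
  by (auto simp: not_le[symmetric])

lemma gens_subset: "{N s -` A \<inter> space M | s A. P s} \<subseteq> Pow (space M)"
  by auto

lemma sets_nat_filtration_inf: "sets (nat_filtration_inf M N) \<subseteq> sets M"
  unfolding nat_filtration_inf_def sets_measure_of[OF gens_subset]
  by (rule sets.sigma_sets_subset) (auto intro: measurable_sets[OF N_meas])

lemma stopped_gens_subset:
  "{A. A \<in> sets (nat_filtration_inf M N) \<and> (\<forall>t\<ge>0. {x \<in> A. T x \<le> ereal t} \<in> sets (nat_filtration M N t))}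
   \<subseteq> Pow (space M)"
  using sets_nat_filtration_inf sets.sets_into_space by blast

lemma subalg_stopped: "subalgebra M (stopped_sigma M N T)"
  unfolding subalgebra_def stopped_sigma_def
  using sets_nat_filtration_inf
  by (auto simp: sets_measure_of[OF stopped_gens_subset] space_measure_of[OF stopped_gens_subset]
      intro!: sets.sigma_sets_subset)

lemma fms_stopped: "finite_measure_subalgebra M (stopped_sigma M N T)"
  unfolding finite_measure_subalgebra_def finite_measure_subalgebra_axioms_def
  using subalg_stopped finite_measure_axioms by auto

lemma tau_le_in_stopped:
  assumes u: "0 \<le> u"
  shows "{x \<in> space M. \<tau> k x \<le> ereal u} \<in> sets (stopped_sigma M N (\<tau> k))"
proof -
  have eq: "\<And>v. 0 \<le> v \<Longrightarrow> {x \<in> space M. \<tau> k x \<le> ereal v} = N v -` {k..} \<inter> space M"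
    using tau_le_iff by auto
  have "{x \<in> space M. \<tau> k x \<le> ereal u} \<in> sets (nat_filtration_inf M N)"
    unfolding nat_filtration_inf_def sets_measure_of[OF gens_subset] eq[OF u]
    using u by (intro sigma_sets.Basic) blast
  moreover have "{x \<in> {x \<in> space M. \<tau> k x \<le> ereal u}. \<tau> k x \<le> ereal t} \<in> sets (nat_filtration M N t)"
    if t: "0 \<le> t" for t
  proof -
    have "{x \<in> {x \<in> space M. \<tau> k x \<le> ereal u}. \<tau> k x \<le> ereal t} = {x \<in> space M. \<tau> k x \<le> ereal (min u t)}"
      apply (auto simp: min_def)
      by (meson ereal_less_eq(3) order_trans linear)+
    also have "\<dots> = N (min u t) -` {k..} \<inter> space M" using eq[of "min u t"] u t by simp
    finally show ?thesis
      unfolding nat_filtration_def sets_measure_of[OF gens_subset]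
      using u t by (intro sigma_sets.Basic) (simp, rule exI[of _ "min u t"], auto)
  qed
  ultimately show ?thesis
    unfolding stopped_sigma_def sets_measure_of[OF stopped_gens_subset]
    by (intro sigma_sets.Basic) auto
qed

end



context lp begin

lemma Gf_meas[measurable]: "(\<lambda>p. Gf \<omega> (fst p) (snd p)) \<in> borel_measurable borel"
  by (rule borel_measurable_continuous_onI[OF Gf_cont[OF cont]])

lemma Gf_meas1[measurable]: "(\<lambda>a. Gf \<omega> a t) \<in> borel_measurable borel"
proof -
  have "continuous_on UNIV (\<lambda>a::real. (a, t))" by (intro continuous_intros)
  from continuous_on_compose2[OF Gf_cont[OF cont] this]
  show ?thesis by (intro borel_measurable_continuous_onI) simp
qed

lemma Gf_integral_eq:
  assumes "0 \<le> a" "a \<le> t"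
  shows "exp (- integral {a..t} (\<lambda>r. \<omega> a r)) = Gf \<omega> a t"
proof -
  have "integral {a..t} (\<lambda>r. \<omega> a r) = integral {a..t} (wt \<omega> a)"
    by (rule integral_cong) (use assms in \<open>auto simp: wt_eq\<close>)
  then show ?thesis by (simp add: Gf_def Phi_eq_integral[OF cont assms(2)])
qed

lemma cond_ident:
  assumes u: "0 \<le> u" and ut: "u \<le> t"
  shows "measure M {x \<in> space M. \<tau> k x \<le> ereal u \<and> ereal t < \<tau> (Suc k) x}
    = (\<integral>x. indicator {x \<in> space M. \<tau> k x \<le> ereal u} x * Gf \<omega> (real_of_ereal (\<tau> k x)) t \<partial>M)"
proof -
  define F where "F = stopped_sigma M N (\<tau> k)"
  interpret fms: finite_measure_subalgebra M F unfolding F_def by (rule fms_stopped)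
  define A where "A = {x \<in> space M. \<tau> k x \<le> ereal u}"
  have AF: "A \<in> sets F" unfolding A_def F_def by (rule tau_le_in_stopped[OF u])
  have AM[measurable]: "A \<in> sets M" unfolding A_def by measurable
  have t: "0 \<le> t" using u ut by simp
  have hyp: "AE x in M. \<tau> k x \<le> ereal t \<longrightarrow>
        real_cond_exp M F (indicator {y. ereal t < \<tau> (Suc k) y}) x
        = exp (- integral {real_of_ereal (\<tau> k x)..t} (\<lambda>u. \<omega> (real_of_ereal (\<tau> k x)) u))"
    using proc t unfolding last_arrival_intensity_process_def F_def
    by (auto dest!: spec[of _ "Suc k"])
  define f :: "'a \<Rightarrow> real" where "f = indicator {y. ereal t < \<tau> (Suc k) y}"
  have fm[measurable]: "f \<in> borel_measurable M"
    unfolding f_def by measurable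
  have fi: "integrable M f"
    by (rule integrable_const_bound[where B=1]) (auto simp: f_def)
  have "(\<integral>x \<in> A. f x \<partial>M) = (\<integral>x \<in> A. real_cond_exp M F f x \<partial>M)"
    by (rule fms.real_cond_exp_intA[OF fi AF])
  also have "\<dots> = (\<integral>x \<in> A. Gf \<omega> (real_of_ereal (\<tau> k x)) t \<partial>M)"
  proof (rule set_lebesgue_integral_cong_AE)
    show "AE x\<in>A in M. real_cond_exp M F f x = Gf \<omega> (real_of_ereal (\<tau> k x)) t"
      using hyp
    proof eventually_elim
      case (elim x)
      show ?case
      proof
        assume xA: "x \<in> A"
        then have le: "\<tau> k x \<le> ereal u" by (simp add: A_def)
        then have le2: "\<tau> k x \<le> ereal t" using ut by (meson ereal_less_eq(3) order_trans)
        have fin: "\<tau> k x = ereal (real_of_ereal (\<tau> k x))"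
          using le tau_nonneg[of k x] by (cases "\<tau> k x") auto
        have a0: "0 \<le> real_of_ereal (\<tau> k x)" using tau_nonneg[of k x] by (simp add: real_of_ereal_pos)
        have at: "real_of_ereal (\<tau> k x) \<le> t" using le2 fin by (metis ereal_less_eq(3))
        show "real_cond_exp M F f x = Gf \<omega> (real_of_ereal (\<tau> k x)) t"
          using elim le2 Gf_integral_eq[OF a0 at] by (simp add: f_def)
      qed
    qed
  qed (auto simp: f_def)
  finally have eq: "(\<integral>x \<in> A. f x \<partial>M) = (\<integral>x \<in> A. Gf \<omega> (real_of_ereal (\<tau> k x)) t \<partial>M)" .
  have "(\<integral>x \<in> A. f x \<partial>M) = (\<integral>x. indicator (A \<inter> {y. ereal t < \<tau> (Suc k) y}) x \<partial>M)"
    unfolding set_lebesgue_integral_def f_def by (intro Bochner_Integration.integral_cong) (auto simp: indicator_def)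
  also have "A \<inter> {y. ereal t < \<tau> (Suc k) y} = {x \<in> space M. \<tau> k x \<le> ereal u \<and> ereal t < \<tau> (Suc k) x}"
    by (auto simp: A_def)
  also have "(\<integral>x. indicator {x \<in> space M. \<tau> k x \<le> ereal u \<and> ereal t < \<tau> (Suc k) x} x \<partial>M)
     = measure M {x \<in> space M. \<tau> k x \<le> ereal u \<and> ereal t < \<tau> (Suc k) x}"
    by (subst Bochner_Integration.integral_indicator) (auto intro!: arg_cong[where f="measure M"])
  finally show ?thesis using eq unfolding set_lebesgue_integral_def A_def by (simp add: mult.commute)
qed

definition mu :: "nat \<Rightarrow> real measure" where
  "mu k = distr (density M (\<lambda>x. ennreal (indicator {x. \<tau> k x < \<infinity>} x))) borel (\<lambda>x. real_of_ereal (\<tau> k x))"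

lemma sets_mu[measurable_cong, simp]: "sets (mu k) = sets borel"
  by (simp add: mu_def)

lemma space_mu[simp]: "space (mu k) = UNIV"
  by (simp add: mu_def)

lemma tau_fin_meas[measurable]: "{x \<in> space M. \<tau> k x < \<infinity>} \<in> sets M"
  by measurable

lemma mu_integral:
  fixes g :: "real \<Rightarrow> real"
  assumes [measurable]: "g \<in> borel_measurable borel"
  shows "(\<integral>a. g a \<partial>mu k) = (\<integral>x. indicator {x. \<tau> k x < \<infinity>} x * g (real_of_ereal (\<tau> k x)) \<partial>M)"
proof -
  have "(\<integral>a. g a \<partial>mu k) = (\<integral>x. g (real_of_ereal (\<tau> k x)) \<partial>density M (\<lambda>x. ennreal (indicator {x. \<tau> k x < \<infinity>} x)))"
    unfolding mu_def
  proof (rule integral_distr)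
    show "(\<lambda>x. real_of_ereal (\<tau> k x)) \<in> measurable (density M (\<lambda>x. ennreal (indicator {x. \<tau> k x < \<infinity>} x))) borel"
      by (subst measurable_cong_sets[OF sets_density refl]) measurable
  qed measurable
  also have "\<dots> = (\<integral>x. indicator {x. \<tau> k x < \<infinity>} x * g (real_of_ereal (\<tau> k x)) \<partial>M)"
    by (subst integral_density) (auto)
  finally show ?thesis .
qed

lemma mu_emeasure:
  assumes [measurable]: "A \<in> sets borel"
  shows "emeasure (mu k) A = emeasure M {x \<in> space M. \<tau> k x < \<infinity> \<and> real_of_ereal (\<tau> k x) \<in> A}"
proof -
  have "emeasure (mu k) A = emeasure (density M (\<lambda>x. ennreal (indicator {x. \<tau> k x < \<infinity>} x)))
      ((\<lambda>x. real_of_ereal (\<tau> k x)) -` A \<inter> space M)"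
    unfolding mu_def
  proof (subst emeasure_distr)
    show "(\<lambda>x. real_of_ereal (\<tau> k x)) \<in> measurable (density M (\<lambda>x. ennreal (indicator {x. \<tau> k x < \<infinity>} x))) borel"
      by (subst measurable_cong_sets[OF sets_density refl]) measurable
  qed auto
  also have "\<dots> = (\<integral>\<^sup>+ x. ennreal (indicator {x. \<tau> k x < \<infinity>} x) * indicator ((\<lambda>x. real_of_ereal (\<tau> k x)) -` A \<inter> space M) x \<partial>M)"
    by (subst emeasure_density) auto
  also have "\<dots> = (\<integral>\<^sup>+ x. indicator {x \<in> space M. \<tau> k x < \<infinity> \<and> real_of_ereal (\<tau> k x) \<in> A} x \<partial>M)"
    by (intro nn_integral_cong) (auto simp: indicator_def)
  also have "\<dots> = emeasure M {x \<in> space M. \<tau> k x < \<infinity> \<and> real_of_ereal (\<tau> k x) \<in> A}"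
    by (intro nn_integral_indicator) measurable
  finally show ?thesis .
qed

lemma mu_finite: "finite_borel_measure (mu k)"
proof -
  have "emeasure (mu k) UNIV \<le> emeasure M (space M)"
    by (subst mu_emeasure) (auto intro!: emeasure_mono)
  then have "emeasure (mu k) (space (mu k)) \<noteq> \<infinity>"
    using emeasure_space_1 by (auto simp: top_unique)
  then show ?thesis
    unfolding finite_borel_measure_def finite_borel_measure_axioms_def
    by (auto intro: finite_measureI)
qed

lemma mu_total_le1: "measure (mu k) A \<le> 1"
proof -
  interpret fb: finite_borel_measure "mu k" by (rule mu_finite)
  have "measure (mu k) A \<le> measure (mu k) UNIV"
    by (metis fb.bounded_measure space_mu)
  also have "\<dots> = measure M {x \<in> space M. \<tau> k x < \<infinity>}"
    by (simp add: measure_def mu_emeasure)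
  also have "\<dots> \<le> 1" by simp
  finally show ?thesis .
qed

lemma ind_eq:
  assumes "x \<in> space M" "0 \<le> u"
  shows "indicator {x. \<tau> k x < \<infinity>} x * indicator {0..u} (real_of_ereal (\<tau> k x))
       = (indicator {y \<in> space M. \<tau> k y \<le> ereal u} x :: real)"
  using assms tau_nonneg[of k x] by (cases "\<tau> k x") (auto simp: indicator_def)

lemma mu_ind_int:
  fixes g :: "real \<Rightarrow> real"
  assumes [measurable]: "g \<in> borel_measurable borel" and u: "0 \<le> u"
  shows "(\<integral>a. indicator {0..u} a * g a \<partial>mu k)
     = (\<integral>x. indicator {y \<in> space M. \<tau> k y \<le> ereal u} x * g (real_of_ereal (\<tau> k x)) \<partial>M)"
proof -
  have "(\<integral>a. indicator {0..u} a * g a \<partial>mu k) = (\<integral>x. indicator {x. \<tau> k x < \<infinity>} x *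
      (indicator {0..u} (real_of_ereal (\<tau> k x)) * g (real_of_ereal (\<tau> k x))) \<partial>M)"
    by (rule mu_integral) measurable
  also have "\<dots> = (\<integral>x. indicator {y \<in> space M. \<tau> k y \<le> ereal u} x * g (real_of_ereal (\<tau> k x)) \<partial>M)"
    by (intro Bochner_Integration.integral_cong refl)
       (metis (no_types, lifting) ind_eq[OF _ u] mult.assoc)
  finally show ?thesis .
qed

lemma cdf_mu_Suc:
  assumes x: "0 \<le> x"
  shows "measure (mu (Suc k)) {..x} = (\<integral>a. indicator {0..x} a * (1 - Gf \<omega> a x) \<partial>mu k)"
proof -
  define A where "A = {y \<in> space M. \<tau> k y \<le> ereal x}"
  define A1 where "A1 = {y \<in> space M. \<tau> (Suc k) y \<le> ereal x}"
  have [measurable]: "A \<in> sets M" "A1 \<in> sets M" unfolding A_def A1_def by measurable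
  have sub: "A1 \<subseteq> A" unfolding A_def A1_def using tau_mono by (auto intro: order_trans)
  have "measure (mu (Suc k)) {..x} = measure M {y \<in> space M. \<tau> (Suc k) y < \<infinity> \<and> real_of_ereal (\<tau> (Suc k) y) \<in> {..x}}"
    by (simp add: measure_def mu_emeasure)
  also have "\<dots> = measure M A1"
    unfolding A1_def using tau_nonneg[of "Suc k"] x
    by (intro arg_cong[where f="measure M"]) (auto, (case_tac "\<tau> (Suc k) xa"; auto)+)
  also have "\<dots> = measure M A - measure M (A - A1)"
    using finite_measure_Diff[of A A1] sub by simp
  also have "A - A1 = {y \<in> space M. \<tau> k y \<le> ereal x \<and> ereal x < \<tau> (Suc k) y}"
    by (auto simp: A_def A1_def not_le)
  also have "measure M \<dots> = (\<integral>y. indicator A y * Gf \<omega> (real_of_ereal (\<tau> k y)) x \<partial>M)"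
    unfolding A_def by (rule cond_ident[OF x order_refl])
  also have "measure M A = (\<integral>y. indicator A y * 1 \<partial>M)" by simp
  also have "(\<integral>y. indicator A y * 1 \<partial>M) - (\<integral>y. indicator A y * Gf \<omega> (real_of_ereal (\<tau> k y)) x \<partial>M)
     = (\<integral>y. indicator A y * (1 - Gf \<omega> (real_of_ereal (\<tau> k y)) x) \<partial>M)"
  proof -
    have i1: "integrable M (\<lambda>y. indicator A y * (1::real))" by (rule integrable_const_bound[where B=1]) auto
    have i2: "integrable M (\<lambda>y. indicator A y * Gf \<omega> (real_of_ereal (\<tau> k y)) x)"
    proof (rule integrable_const_bound[where B=1])
      show "AE y in M. norm (indicator A y * Gf \<omega> (real_of_ereal (\<tau> k y)) x) \<le> 1"
      proof (rule AE_I2)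
        fix y assume "y \<in> space M"
        show "norm (indicator A y * Gf \<omega> (real_of_ereal (\<tau> k y)) x) \<le> 1"
        proof (cases "y \<in> A")
          case True
          then have "\<tau> k y \<le> ereal x" by (simp add: A_def)
          then have "real_of_ereal (\<tau> k y) \<le> x" using tau_nonneg[of k y] x
            by (cases "\<tau> k y") auto
          then show ?thesis using True Gf_le1[OF cont nn, of "real_of_ereal (\<tau> k y)" x] by simp
        qed simp
      qed
    qed measurable
    show ?thesis using Bochner_Integration.integral_diff[OF i1 i2, symmetric] by (simp add: algebra_simps)
  qed
  also have "\<dots> = (\<integral>a. indicator {0..x} a * (1 - Gf \<omega> a x) \<partial>mu k)"
    unfolding A_def by (rule mu_ind_int[symmetric, OF _ x]) measurable
  finally show ?thesis .
qed

end



context lp begin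

definition hf :: "real \<Rightarrow> real \<Rightarrow> real" where
  "hf a r = wt \<omega> a r * Gf \<omega> a r"

definition fd :: "nat \<Rightarrow> real \<Rightarrow> real" where
  "fd k r = (\<integral>a. (if 0 \<le> a \<and> a \<le> r then hf a r else 0) \<partial>mu k)"

lemma hf_cont: "continuous_on UNIV (\<lambda>p. hf (fst p) (snd p))"
  unfolding hf_def by (intro continuous_intros wt_cont[OF cont] Gf_cont[OF cont])

lemma hf_cont2: "isCont (hf b) a"
proof -
  have "continuous_on UNIV (\<lambda>r::real. (b, r))" by (intro continuous_intros)
  from continuous_on_compose2[OF hf_cont this]
  have "continuous_on UNIV (hf b)" by simp
  then show ?thesis by (simp add: continuous_on_eq_continuous_at)
qed

lemma hf_meas[measurable]: "(\<lambda>p. hf (fst p) (snd p)) \<in> borel_measurable borel"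
  by (rule borel_measurable_continuous_onI[OF hf_cont])

lemma hf_bounds: assumes "a \<le> r" shows "0 \<le> hf a r" "hf a r \<le> B"
proof -
  have w: "0 \<le> wt \<omega> a r" "wt \<omega> a r \<le> B" using wt_nonneg[OF nn] wt_le[OF bd] by auto
  have g: "0 < Gf \<omega> a r" "Gf \<omega> a r \<le> 1" using Gf_le1[OF cont nn assms] by auto
  show "0 \<le> hf a r" unfolding hf_def using w g by simp
  show "hf a r \<le> B" unfolding hf_def using w g B_nonneg mult_mono[of "wt \<omega> a r" B "Gf \<omega> a r" 1] by simp
qed

lemma ifhf_bounds: "0 \<le> (if 0 \<le> a \<and> a \<le> r then hf a r else 0)" "(if 0 \<le> a \<and> a \<le> r then hf a r else 0) \<le> B"
  using hf_bounds[of a r] B_nonneg by auto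

lemma hf_meas2: "(\<lambda>p. hf (fst p) (snd p)) \<in> borel_measurable (borel \<Otimes>\<^sub>M borel)"
  unfolding borel_prod by (rule hf_meas)

lemma hf_measQ[measurable (raw)]:
  assumes "f \<in> borel_measurable Q" "g \<in> borel_measurable Q"
  shows "(\<lambda>x. hf (f x) (g x)) \<in> borel_measurable Q"
proof -
  have "(\<lambda>x. (f x, g x)) \<in> measurable Q (borel \<Otimes>\<^sub>M borel)" using assms by measurable
  from measurable_compose[OF this hf_meas2] show ?thesis by simp
qed

lemma ifhf_int: "integrable (mu k) (\<lambda>a. if 0 \<le> a \<and> a \<le> r then hf a r else 0)"
proof -
  interpret fb: finite_borel_measure "mu k" by (rule mu_finite)
  show ?thesis
  proof (rule fb.integrable_const_bound[where B=B])
    show "AE x in mu k. norm (if 0 \<le> x \<and> x \<le> r then hf x r else 0) \<le> B"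
    proof (rule AE_I2)
      fix x
      have "0 \<le> (if 0 \<le> x \<and> x \<le> r then hf x r else 0)" "(if 0 \<le> x \<and> x \<le> r then hf x r else 0) \<le> B"
        by (rule ifhf_bounds)+
      then show "norm (if 0 \<le> x \<and> x \<le> r then hf x r else 0) \<le> B"
        by (simp only: real_norm_def abs_of_nonneg)
    qed
    show "(\<lambda>a. if 0 \<le> a \<and> a \<le> r then hf a r else 0) \<in> borel_measurable (mu k)"
      by measurable
  qed
qed

lemma fd_nonneg: "0 \<le> fd k r"
  unfolding fd_def by (rule integral_nonneg_AE, rule AE_I2, rule ifhf_bounds)

lemma fd_le: "fd k r \<le> B"
proof -
  interpret fb: finite_borel_measure "mu k" by (rule mu_finite)
  have "fd k r \<le> (\<integral>a. B \<partial>mu k)"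
    unfolding fd_def by (rule integral_mono[OF ifhf_int]) (simp, rule ifhf_bounds(2))
  also have "\<dots> = B * measure (mu k) UNIV" by simp
  also have "\<dots> \<le> B * 1" using mu_total_le1 B_nonneg by (intro mult_left_mono) auto
  finally show ?thesis by simp
qed

lemma fd_neg: assumes "r < 0" shows "fd k r = 0"
proof -
  have "(\<lambda>a. if 0 \<le> a \<and> a \<le> r then hf a r else 0) = (\<lambda>_. 0)" using assms by auto
  then show ?thesis unfolding fd_def by simp
qed

lemma fd_meas[measurable]: "fd k \<in> borel_measurable borel"
proof -
  interpret fb: finite_borel_measure "mu k" by (rule mu_finite)
  have "(\<lambda>r. \<integral>a. (if 0 \<le> a \<and> a \<le> r then hf a r else 0) \<partial>mu k) \<in> borel_measurable borel"
    by (rule fb.borel_measurable_lebesgue_integral) (simp only: split_beta', measurable)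
  then show ?thesis unfolding fd_def[abs_def] .
qed

end



context lp begin

lemma hf_ftc_nn:
  assumes "0 \<le> a" "a \<le> x"
  shows "(\<integral>\<^sup>+ r. ennreal (hf a r) * indicator {a..x} r \<partial>lborel) = ennreal (1 - Gf \<omega> a x)"
  by (rule nn_integral_has_integral_lebesgue'[OF _ Gf_ftc[OF cont assms(2), folded hf_def]])
     (auto intro: hf_bounds)

lemma inner_eq:
  "(\<integral>\<^sup>+ r. ennreal (if 0 \<le> a \<and> a \<le> r then hf a r else 0) * indicator {..x} r \<partial>lborel)
   = ennreal (indicator {0..x} a * (1 - Gf \<omega> a x))"
proof (cases "0 \<le> a \<and> a \<le> x")
  case True
  have "(\<integral>\<^sup>+ r. ennreal (if 0 \<le> a \<and> a \<le> r then hf a r else 0) * indicator {..x} r \<partial>lborel)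
     = (\<integral>\<^sup>+ r. ennreal (hf a r) * indicator {a..x} r \<partial>lborel)"
    using True by (intro nn_integral_cong) (auto simp: indicator_def)
  also have "\<dots> = ennreal (1 - Gf \<omega> a x)" using True by (intro hf_ftc_nn) auto
  finally show ?thesis using True by simp
next
  case False
  have "(\<integral>\<^sup>+ r. ennreal (if 0 \<le> a \<and> a \<le> r then hf a r else 0) * indicator {..x} r \<partial>lborel)
     = (\<integral>\<^sup>+ (r::real). 0 \<partial>lborel)"
    using False by (intro nn_integral_cong) (auto simp: indicator_def)
  then show ?thesis using False by simp
qed

lemma G_int:
  "integrable (mu k) (\<lambda>a. indicator {0..x} a * (1 - Gf \<omega> a x))"
proof -
  interpret fb: finite_borel_measure "mu k" by (rule mu_finite)
  show ?thesis
  proof (rule fb.integrable_const_bound[where B=1])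
    show "AE a in mu k. norm (indicator {0..x} a * (1 - Gf \<omega> a x)) \<le> 1"
    proof (rule AE_I2)
      fix a show "norm (indicator {0..x} a * (1 - Gf \<omega> a x)) \<le> 1"
        using Gf_le1[OF cont nn, of a x] by (auto simp: indicator_def)
    qed
  qed measurable
qed

lemma G_nonneg: "0 \<le> indicator {0..x} a * (1 - Gf \<omega> a x)"
  using Gf_le1[OF cont nn, of a x] by (auto simp: indicator_def)

lemma dens_cdf:
  "emeasure (density lborel (\<lambda>r. ennreal (fd k r))) {..x}
   = ennreal (\<integral>a. indicator {0..x} a * (1 - Gf \<omega> a x) \<partial>mu k)"
proof -
  interpret fb: finite_borel_measure "mu k" by (rule mu_finite)
  interpret pf: pair_sigma_finite "mu k" lborel ..
  have "emeasure (density lborel (\<lambda>r. ennreal (fd k r))) {..x}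
      = (\<integral>\<^sup>+ r. ennreal (fd k r) * indicator {..x} r \<partial>lborel)"
    by (rule emeasure_density) auto
  also have "\<dots> = (\<integral>\<^sup>+ r. (\<integral>\<^sup>+ a. ennreal (if 0 \<le> a \<and> a \<le> r then hf a r else 0) * indicator {..x} r \<partial>mu k) \<partial>lborel)"
  proof (intro nn_integral_cong)
    fix r
    have "ennreal (fd k r) = (\<integral>\<^sup>+ a. ennreal (if 0 \<le> a \<and> a \<le> r then hf a r else 0) \<partial>mu k)"
      unfolding fd_def by (rule nn_integral_eq_integral[OF ifhf_int, symmetric]) (rule AE_I2, rule ifhf_bounds)
    then show "ennreal (fd k r) * indicator {..x} r = (\<integral>\<^sup>+ a. ennreal (if 0 \<le> a \<and> a \<le> r then hf a r else 0) * indicator {..x} r \<partial>mu k)"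
      by (simp add: nn_integral_multc)
  qed
  also have "\<dots> = (\<integral>\<^sup>+ a. (\<integral>\<^sup>+ r. ennreal (if 0 \<le> a \<and> a \<le> r then hf a r else 0) * indicator {..x} r \<partial>lborel) \<partial>mu k)"
    by (rule pf.Fubini') (simp only: split_beta', measurable)
  also have "\<dots> = (\<integral>\<^sup>+ a. ennreal (indicator {0..x} a * (1 - Gf \<omega> a x)) \<partial>mu k)"
    by (simp only: inner_eq)
  also have "\<dots> = ennreal (\<integral>a. indicator {0..x} a * (1 - Gf \<omega> a x) \<partial>mu k)"
    by (rule nn_integral_eq_integral[OF G_int]) (rule AE_I2, rule G_nonneg)
  finally show ?thesis .
qed

lemma cdf_mu_Suc':
  "measure (mu (Suc k)) {..x} = (\<integral>a. indicator {0..x} a * (1 - Gf \<omega> a x) \<partial>mu k)"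
proof (cases "0 \<le> x")
  case True then show ?thesis by (rule cdf_mu_Suc)
next
  case False
  have e0: "{y \<in> space M. \<tau> (Suc k) y < \<infinity> \<and> real_of_ereal (\<tau> (Suc k) y) \<in> {..x}} = {}"
  proof -
    have nn0: "0 \<le> real_of_ereal (\<tau> (Suc k) y)" for y using tau_nonneg by (simp add: real_of_ereal_pos)
    have "\<not> real_of_ereal (\<tau> (Suc k) y) \<le> x" for y using nn0[of y] False by linarith
    then show ?thesis by auto
  qed
  have "emeasure (mu (Suc k)) {..x} = 0" by (subst mu_emeasure, simp, subst e0, simp)
  then have "measure (mu (Suc k)) {..x} = 0" by (simp add: measure_def)
  moreover have "(\<lambda>a. indicator {0..x} a * (1 - Gf \<omega> a x)) = (\<lambda>_. 0::real)"
    using False by (auto simp: indicator_def)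
  ultimately show ?thesis by simp
qed

lemma dens_finite: "finite_borel_measure (density lborel (\<lambda>r. ennreal (fd k r)))"
proof -
  let ?D = "density lborel (\<lambda>r. ennreal (fd k r))"
  have e: "emeasure ?D {..real n} \<le> 1" for n
  proof -
    have "emeasure ?D {..real n} = ennreal (measure (mu (Suc k)) {..real n})"
      by (simp add: dens_cdf cdf_mu_Suc')
    also have "\<dots> \<le> 1" using mu_total_le1 by simp
    finally show ?thesis .
  qed
  have "(SUP n. emeasure ?D {..real n}) = emeasure ?D (\<Union>n. {..real n})"
    by (rule SUP_emeasure_incseq) (auto simp: incseq_def)
  moreover have "(\<Union>n. {..real n}) = UNIV"
    by (auto intro: real_arch_simple)
  ultimately have "emeasure ?D UNIV \<le> 1"
    using e by (metis SUP_least)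
  then have "emeasure ?D (space ?D) \<noteq> \<infinity>" by (auto simp: top_unique)
  then show ?thesis
    unfolding finite_borel_measure_def finite_borel_measure_axioms_def
    by (auto intro: finite_measureI)
qed

lemma mu_Suc_density: "mu (Suc k) = density lborel (\<lambda>r. ennreal (fd k r))"
proof (rule cdf_unique'[OF mu_finite dens_finite])
  show "cdf (mu (Suc k)) = cdf (density lborel (\<lambda>r. ennreal (fd k r)))"
  proof
    fix x
    have "cdf (density lborel (\<lambda>r. ennreal (fd k r))) x = enn2real (ennreal (\<integral>a. indicator {0..x} a * (1 - Gf \<omega> a x) \<partial>mu k))"
      unfolding cdf_def measure_def dens_cdf ..
    also have "\<dots> = (\<integral>a. indicator {0..x} a * (1 - Gf \<omega> a x) \<partial>mu k)"
      by (rule enn2real_ennreal) (rule integral_nonneg_AE, rule AE_I2, rule G_nonneg)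
    finally show "cdf (mu (Suc k)) x = cdf (density lborel (\<lambda>r. ennreal (fd k r))) x"
      by (simp add: cdf_def cdf_mu_Suc')
  qed
qed

lemma mu_no_atom:
  assumes r: "r > 0"
  shows "emeasure (mu k) {r} = 0"
proof (cases k)
  case 0
  have "{x \<in> space M. \<tau> 0 x < \<infinity> \<and> real_of_ereal (\<tau> 0 x) \<in> {r}} = {}"
    using r by (auto simp: tau_0)
  then show ?thesis using 0 r by (simp add: mu_emeasure tau_0)
next
  case (Suc j)
  have "emeasure (mu k) {r} = (\<integral>\<^sup>+ x. ennreal (fd j x) * indicator {r} x \<partial>lborel)"
    unfolding Suc mu_Suc_density by (rule emeasure_density) auto
  also have "\<dots> = (\<integral>\<^sup>+ (x::real). 0 \<partial>lborel)"
    by (rule nn_integral_cong_AE) (use AE_lborel_singleton[of r] in \<open>auto simp: indicator_def\<close>)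
  finally show ?thesis by simp
qed

end



context lp begin

lemma fd_cont: "continuous_on {0..} (fd k)"
proof (rule continuous_on_sequentiallyI)
  fix u :: "nat \<Rightarrow> real" and a :: real
  assume u: "\<forall>n. u n \<in> {0..}" and a: "a \<in> {0..}" and lim: "u \<longlonglongrightarrow> a"
  interpret fb: finite_borel_measure "mu k" by (rule mu_finite)
  have ae: "AE b in mu k. b \<noteq> a \<or> a = 0"
  proof (cases "a = 0")
    case True then show ?thesis by simp
  next
    case False
    with a have "a > 0" by simp
    show ?thesis
      by (rule AE_I[of _ _ "{a}"]) (auto simp: mu_no_atom[OF \<open>a > 0\<close>])
  qed
  show "(\<lambda>n. fd k (u n)) \<longlonglongrightarrow> fd k a"
    unfolding fd_def
  proof (rule integral_dominated_convergence[where w="\<lambda>_. B"])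
    show "AE b in mu k. (\<lambda>n. if 0 \<le> b \<and> b \<le> u n then hf b (u n) else 0) \<longlonglongrightarrow> (if 0 \<le> b \<and> b \<le> a then hf b a else 0)"
      using ae
    proof eventually_elim
      case (elim b)
      have hc: "(\<lambda>n. hf b (u n)) \<longlonglongrightarrow> hf b a"
        by (rule isCont_tendsto_compose[OF hf_cont2 lim])
      show ?case
      proof (cases "b < 0")
        case True then show ?thesis by simp
      next
        case False
        show ?thesis
        proof (cases "a < b")
          case True
          have "eventually (\<lambda>n. u n < b) sequentially" by (rule order_tendstoD(2)[OF lim True])
          then have "eventually (\<lambda>n. (if 0 \<le> b \<and> b \<le> u n then hf b (u n) else 0) = 0) sequentially"
            by (rule eventually_mono) auto
          then show ?thesis using True by (simp add: tendsto_eventually)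
        next
          case False2: False
          show ?thesis
          proof (cases "b < a")
            case True
            have "eventually (\<lambda>n. b < u n) sequentially" by (rule order_tendstoD(1)[OF lim True])
            then have "eventually (\<lambda>n. hf b (u n) = (if 0 \<le> b \<and> b \<le> u n then hf b (u n) else 0)) sequentially"
              by (rule eventually_mono) (use \<open>\<not> b < 0\<close> in auto)
            from Lim_transform_eventually[OF hc this] show ?thesis using True \<open>\<not> b < 0\<close> by simp
          next
            case False
            then have "b = a" using False2 by simp
            with elim have "a = 0" by simp
            have "(\<lambda>n. if 0 \<le> b \<and> b \<le> u n then hf b (u n) else 0) = (\<lambda>n. hf b (u n))"
              using u \<open>b = a\<close> \<open>a = 0\<close> by auto
            then show ?thesis using hc \<open>b = a\<close> \<open>a = 0\<close> by simp
          qed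
        qed
      qed
    qed
    show "\<And>i. AE b in mu k. norm (if 0 \<le> b \<and> b \<le> u i then hf b (u i) else 0) \<le> B"
    proof (rule AE_I2)
      fix i b
      have "0 \<le> (if 0 \<le> b \<and> b \<le> u i then hf b (u i) else 0)" "(if 0 \<le> b \<and> b \<le> u i then hf b (u i) else 0) \<le> B"
        by (rule ifhf_bounds)+
      then show "norm (if 0 \<le> b \<and> b \<le> u i then hf b (u i) else 0) \<le> B"
        by (simp only: real_norm_def abs_of_nonneg)
    qed
  qed (auto)
qed

lemma H_eq:
  assumes "0 \<le> v" "v \<le> r"
  shows "measure M {x \<in> space M. N r x = Suc j \<and> N v x = Suc j}
     = integral {0..v} (\<lambda>a. fd j a * Gf \<omega> a r)"
proof -
  have c: "continuous_on {0..v} (\<lambda>a. fd j a * Gf \<omega> a r)"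
  proof (intro continuous_intros)
    show "continuous_on {0..v} (fd j)" by (rule continuous_on_subset[OF fd_cont]) auto
    have "continuous_on UNIV (\<lambda>a::real. (a, r))" by (intro continuous_intros)
    from continuous_on_compose2[OF Gf_cont[OF cont] this]
    show "continuous_on {0..v} (\<lambda>a. Gf \<omega> a r)" by (auto intro: continuous_on_subset)
  qed
  have "{x \<in> space M. N r x = Suc j \<and> N v x = Suc j}
      = {x \<in> space M. \<tau> (Suc j) x \<le> ereal v \<and> ereal r < \<tau> (Suc (Suc j)) x}"
    using event_eq[OF _ assms] by blast
  then have "measure M {x \<in> space M. N r x = Suc j \<and> N v x = Suc j}
      = (\<integral>x. indicator {y \<in> space M. \<tau> (Suc j) y \<le> ereal v} x * Gf \<omega> (real_of_ereal (\<tau> (Suc j) x)) r \<partial>M)"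
    using cond_ident[OF assms] by simp
  also have "\<dots> = (\<integral>a. indicator {0..v} a * Gf \<omega> a r \<partial>mu (Suc j))"
    by (rule mu_ind_int[symmetric]) (use assms in auto)
  also have "\<dots> = (\<integral>a. fd j a * (indicator {0..v} a * Gf \<omega> a r) \<partial>lborel)"
    unfolding mu_Suc_density
    by (subst integral_density) (auto intro: fd_nonneg)
  also have "\<dots> = (LINT a:{0..v}|lborel. fd j a * Gf \<omega> a r)"
    unfolding set_lebesgue_integral_def
    by (intro Bochner_Integration.integral_cong) (auto simp: indicator_def)
  also have "\<dots> = integral {0..v} (\<lambda>a. fd j a * Gf \<omega> a r)"
    by (rule set_borel_integral_eq_integral(2)[OF borel_integrable_atLeastAtMost'[OF c]])
  finally show ?thesis .
qed

end



context lp begin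

lemma final:
  assumes "k \<ge> 1" and s0: "0 \<le> s" and st: "s < t"
  shows "(\<forall>u\<in>{0<..<s}.
            (\<lambda>v. measure M {x \<in> space M. N t x = k \<and> N v x = k}) differentiable (at u))
       \<and> (\<lambda>u. \<omega> u t * deriv (\<lambda>v. measure M {x \<in> space M. N t x = k \<and> N v x = k}) u)
            integrable_on {0..s}
       \<and> ((\<lambda>r. measure M {x \<in> space M. N r x = k \<and> N s x = k}) has_real_derivative
            - integral {0..s} (\<lambda>u. \<omega> u t *
                 deriv (\<lambda>v. measure M {x \<in> space M. N t x = k \<and> N v x = k}) u)) (at t)"
proof -
  obtain j where k: "k = Suc j" using assms(1) by (cases k) auto
  define P where "P v = measure M {x \<in> space M. N t x = k \<and> N v x = k}" for v
  define g where "g a = fd j a * Gf \<omega> a t" for a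
  have Gc: "continuous_on UNIV (\<lambda>a. Gf \<omega> a r)" for r
  proof -
    have "continuous_on UNIV (\<lambda>a::real. (a, r))" by (intro continuous_intros)
    from continuous_on_compose2[OF Gf_cont[OF cont] this] show ?thesis by simp
  qed
  have wc: "continuous_on UNIV (\<lambda>a. wt \<omega> a r)" for r
  proof -
    have "continuous_on UNIV (\<lambda>a::real. (a, r))" by (intro continuous_intros)
    from continuous_on_compose2[OF wt_cont[OF cont] this] show ?thesis by simp
  qed
  have fc: "continuous_on S (fd j)" if "S \<subseteq> {0..}" for S
    by (rule continuous_on_subset[OF fd_cont that])
  have gc: "continuous_on {0..t} g"
    unfolding g_def by (intro continuous_intros fc continuous_on_subset[OF Gc]) auto
  have Peq: "P v = integral {0..v} g" if "0 \<le> v" "v \<le> t" for v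
    unfolding P_def g_def k using H_eq[OF that] .
  have dP: "(P has_real_derivative g u) (at u)" if u: "0 < u" "u < t" for u
  proof -
    have "((\<lambda>v. integral {0..v} g) has_real_derivative g u) (at u within {0..t})"
      by (rule integral_has_real_derivative[OF gc]) (use u in auto)
    then have "((\<lambda>v. integral {0..v} g) has_real_derivative g u) (at u)"
      using at_within_Icc_at[of 0 u t] u by simp
    then show ?thesis
      by (rule has_field_derivative_transform_within_open[of _ _ _ "{0<..<t}"]) (use u Peq in auto)
  qed
  have diff: "\<forall>u\<in>{0<..<s}. P differentiable (at u)"
  proof
    fix u assume "u \<in> {0<..<s}"
    then have "(P has_real_derivative g u) (at u)" using dP st by auto
    then show "P differentiable (at u)"
      unfolding differentiable_def has_field_derivative_def by blast
  qed
  have dv: "deriv P u = g u" if "u \<in> {0<..<s}" for u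
    using dP[of u] that st by (auto intro: DERIV_imp_deriv)
  define h where "h u = wt \<omega> u t * g u" for u
  have hc: "continuous_on {0..s} h"
    unfolding h_def using st by (intro continuous_intros continuous_on_subset[OF wc] continuous_on_subset[OF gc]) auto
  have spike: "\<omega> u t * deriv P u = h u" if "u \<in> {0..s} - {0, s}" for u
    using that st dv[of u] by (auto simp: h_def wt_eq)
  have hint: "(h has_integral integral {0..s} h) {0..s}"
    using integrable_continuous_interval[OF hc] by (simp add: integrable_integral)
  have int1: "((\<lambda>u. \<omega> u t * deriv P u) has_integral integral {0..s} h) {0..s}"
    by (rule has_integral_spike_finite[where S="{0, s}", OF _ spike hint]) auto
  define U where "U = {s<..}"
  have leib: "((\<lambda>r. integral (cbox 0 s) (\<lambda>a. fd j a * Gf \<omega> a r)) has_field_derivative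
        integral (cbox 0 s) (\<lambda>a. fd j a * (-(wt \<omega> a t * Gf \<omega> a t)))) (at t within U)"
  proof (rule leibniz_rule_field_derivative)
    fix r a assume r: "r \<in> U" and a: "a \<in> cbox 0 s"
    have "a < r" using r a by (auto simp: U_def cbox_interval)
    show "((\<lambda>r. fd j a * Gf \<omega> a r) has_field_derivative fd j a * (-(wt \<omega> a r * Gf \<omega> a r))) (at r within U)"
      by (rule DERIV_cmult, rule has_field_derivative_at_within, rule Gf_deriv_at[OF cont \<open>a < r\<close>])
  next
    fix r assume "r \<in> U"
    show "(\<lambda>a. fd j a * Gf \<omega> a r) integrable_on cbox 0 s"
      unfolding cbox_interval
      by (rule integrable_continuous_interval) (intro continuous_intros fc continuous_on_subset[OF Gc], auto)
  next
    have c1: "continuous_on (U \<times> cbox 0 s) (\<lambda>p. fd j (snd p))"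
      by (rule continuous_on_compose2[OF fd_cont]) (auto intro!: continuous_intros simp: cbox_interval)
    have sw: "continuous_on (U \<times> cbox 0 s) (\<lambda>p::real\<times>real. (snd p, fst p))"
      by (intro continuous_intros)
    have c2: "continuous_on (U \<times> cbox 0 s) (\<lambda>p. wt \<omega> (snd p) (fst p))"
      using continuous_on_compose2[OF wt_cont[OF cont] sw] by simp
    have c3: "continuous_on (U \<times> cbox 0 s) (\<lambda>p. Gf \<omega> (snd p) (fst p))"
      using continuous_on_compose2[OF Gf_cont[OF cont] sw] by simp
    show "continuous_on (U \<times> cbox 0 s) (\<lambda>(r, a). fd j a * (-(wt \<omega> a r * Gf \<omega> a r)))"
      using continuous_on_mult[OF c1 continuous_on_minus[OF continuous_on_mult[OF c2 c3]]]
      by (simp add: split_beta)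
  next
    show "t \<in> U" using st by (simp add: U_def)
    show "convex U" by (simp add: U_def)
  qed
  then have leib2: "((\<lambda>r. integral {0..s} (\<lambda>a. fd j a * Gf \<omega> a r)) has_field_derivative
        integral {0..s} (\<lambda>a. fd j a * (-(wt \<omega> a t * Gf \<omega> a t)))) (at t)"
    using at_within_open[of t U] st by (simp add: U_def cbox_interval)
  have val: "integral {0..s} (\<lambda>a. fd j a * (-(wt \<omega> a t * Gf \<omega> a t))) = - integral {0..s} h"
  proof -
    have "integral {0..s} (\<lambda>a. fd j a * (-(wt \<omega> a t * Gf \<omega> a t))) = integral {0..s} (\<lambda>a. - h a)"
      by (rule integral_cong) (simp add: h_def g_def algebra_simps)
    also have "\<dots> = - integral {0..s} h" by (rule integral_neg)
    finally show ?thesis .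
  qed
  have dQ: "((\<lambda>r. measure M {x \<in> space M. N r x = k \<and> N s x = k}) has_real_derivative - integral {0..s} h) (at t)"
  proof (rule has_field_derivative_transform_within_open[OF leib2[unfolded val], of "{s<..}"])
    fix r assume "r \<in> {s<..}"
    then show "integral {0..s} (\<lambda>a. fd j a * Gf \<omega> a r) = measure M {x \<in> space M. N r x = k \<and> N s x = k}"
      using H_eq[OF s0, of r j] k by simp
  qed (use st in auto)
  show ?thesis
    using diff int1 dQ unfolding P_def[abs_def]
    by (auto simp: has_integral_integrable_integral)
qed

end

theorem proposition3p1:
  fixes M :: "'a measure" and \<omega> :: "real \<Rightarrow> real \<Rightarrow> real" and N :: "real \<Rightarrow> 'a \<Rightarrow> nat"
  assumes "prob_space M"
    and "\<And>s t. 0 \<le> s \<Longrightarrow> s \<le> t \<Longrightarrow> 0 \<le> \<omega> s t"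
    and "\<exists>B. \<forall>s t. 0 \<le> s \<and> s \<le> t \<longrightarrow> \<omega> s t \<le> B"
    and "continuous_on {p. 0 \<le> fst p \<and> fst p \<le> snd p} (\<lambda>p. \<omega> (fst p) (snd p))"
    and "last_arrival_intensity_process M \<omega> N"
    and "k \<ge> 1" and "0 \<le> s" and "s < t"
  shows "(\<forall>u\<in>{0<..<s}.
            (\<lambda>v. measure M {x \<in> space M. N t x = k \<and> N v x = k}) differentiable (at u))
       \<and> (\<lambda>u. \<omega> u t * deriv (\<lambda>v. measure M {x \<in> space M. N t x = k \<and> N v x = k}) u)
            integrable_on {0..s}
       \<and> ((\<lambda>r. measure M {x \<in> space M. N r x = k \<and> N s x = k}) has_real_derivative
            - integral {0..s} (\<lambda>u. \<omega> u t *
                 deriv (\<lambda>v. measure M {x \<in> space M. N t x = k \<and> N v x = k}) u)) (at t)"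
proof -
  obtain B where B: "\<forall>s t. 0 \<le> s \<and> s \<le> t \<longrightarrow> \<omega> s t \<le> B" using assms(3) by blast
  interpret lp M \<omega> N B
  proof (rule lp.intro[OF assms(1)], rule lp_axioms.intro)
    show "\<And>s t. 0 \<le> s \<Longrightarrow> s \<le> t \<Longrightarrow> 0 \<le> \<omega> s t" by (rule assms(2))
    show "\<And>s t. 0 \<le> s \<Longrightarrow> s \<le> t \<Longrightarrow> \<omega> s t \<le> B" using B by blast
  qed (use assms(4,5) in auto)
  show ?thesis by (rule final[OF assms(6-8)])
qed

end
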